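(* In a realisation of a local affine Gaudin model (setting below), let $\mathcal P(z)=\sum_{\alpha\in\Sigma}\sum_{p=0}^{m_\alpha-1}\frac{\mathcal D^\alpha_{[p]}}{(z-z_\alpha)^{p+1}}$ and $\mathcal H(z)=\frac12\int_{\mathbb D}dx\,\kappa\big(\Gamma(z,x),\Gamma(z,x)\big)-\varphi(z)\mathcal P(z)$. Then, as a rational function of $z$, $\mathcal H(z)$ has at each $z_\alpha$ a pole of order at most $m_\alpha$.
   Context: $\mathfrak g$: finite-dimensional simple complex Lie algebra, $\kappa$: minus its Killing form, $C_{12}=I_a\otimes I^a$ for dual bases w.r.t. $\kappa$; $\mathfrak g_0$: real form, fixed points of an antilinear involution $\tau$. $\mathbb D$ is $\mathbb R$ or the circle; $\delta'_{xy}=\partial_x\delta(x-y)$. Data: a finite set of sites $\Sigma=\Sigma_r\sqcup\Sigma_c\sqcup\bar\Sigma_c$ (real sites, complex sites, their conjugates $\bar\alpha$), multiplicities $m_\alpha\ge1$ ($m_{\bar\alpha}=m_\alpha$), levels $\ell^\alpha_{[p]}$, $0\le p\le m_\alpha-1$ (real for real sites, $\ell^{\bar\alpha}_{[p]}=\overline{\ell^\alpha_{[p]}}$), with $\ell^\alpha_{[m_\alpha-1]}\neq0$; pairwise distinct positions $z_\alpha$ (real for real sites, $z_{\bar\alpha}=\overline{z_\alpha}$); a real $\ell^\infty\neq0$. A realisation is a Poisson algebra $\mathcal A$ of local observables of a field theory on $\mathbb D$ containing $\mathfrak g$-valued fields $\mathcal J^\alpha_{[p]}(x)$ with $\{\mathcal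 J^\alpha_{[p]}{}_1(x),\mathcal J^\beta_{[q]}{}_2(y)\}=\delta_{\alpha\beta}([C_{12},\mathcal J^\alpha_{[p+q]}{}_1(x)]\delta_{xy}-\ell^\alpha_{[p+q]}C_{12}\delta'_{xy})$ if $p+q<m_\alpha$ and $0$ otherwise, with reality conditions $\tau(\mathcal J^\alpha_{[p]})=\mathcal J^\alpha_{[p]}$ (real $\alpha$), $\tau(\mathcal J^\alpha_{[p]})=\mathcal J^{\bar\alpha}_{[p]}$ (complex $\alpha$). Twist function $\varphi(z)=\sum_{\alpha\in\Sigma}\sum_{p=0}^{m_\alpha-1}\frac{\ell^\alpha_{[p]}}{(z-z_\alpha)^{p+1}}-\ell^\infty$; Gaudin Lax matrix $\Gamma(z,x)=\sum_\alpha\sum_p\frac{\mathcal J^\alpha_{[p]}(x)}{(z-z_\alpha)^{p+1}}$. For each $\alpha$, $\eta^\alpha_{[p]}$ ($0\le p\le 2m_\alpha-2$) denotes the unique solution of $\sum_{p=0}^{m_\alpha-1-r}\eta^\alpha_{[p+q]}\ell^\alpha_{[p+r]}=\delta_{q,r}$ for all $q,r\in\{0,\dots,m_\alpha-1\}$, and $\mathcal D^\alpha_{[p]}=\frac12\sum_{q,r=0,\,q+r\ge p}^{m_\alpha-1}\eta^\alpha_{[q+r-p]}\int_{\mathbb D}dx\,\kappa(\mathcal J^\alpha_{[q]}(x),\mathcal J^\alpha_{[r]}(x))$ (generalised Segal-Sugawara integrals). *)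

theory Defs
  imports "HOL-Analysis.Analysis"
begin

definition lie_br :: "('n::finite \<Rightarrow> 'n \<Rightarrow> 'n \<Rightarrow> complex) \<Rightarrow> complex^'n \<Rightarrow> complex^'n \<Rightarrow> complex^'n" where
  "lie_br c x y = (\<chi> k. \<Sum>i\<in>UNIV. \<Sum>j\<in>UNIV. c i j k * x$i * y$j)"

definition is_lie_algebra :: "('n::finite \<Rightarrow> 'n \<Rightarrow> 'n \<Rightarrow> complex) \<Rightarrow> bool" where
  "is_lie_algebra c \<longleftrightarrow> (\<forall>x. lie_br c x x = 0) \<and>
     (\<forall>x y w. lie_br c x (lie_br c y w) + lie_br c y (lie_br c w x) + lie_br c w (lie_br c x y) = 0)"

definition is_cideal :: "('n::finite \<Rightarrow> 'n \<Rightarrow> 'n \<Rightarrow> complex) \<Rightarrow> (complex^'n) set \<Rightarrow> bool" where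
  "is_cideal c I \<longleftrightarrow> 0 \<in> I \<and> (\<forall>x\<in>I. \<forall>y\<in>I. x + y \<in> I) \<and> (\<forall>a. \<forall>x\<in>I. a *s x \<in> I)
     \<and> (\<forall>x. \<forall>y\<in>I. lie_br c x y \<in> I)"

definition is_simple_lie :: "('n::finite \<Rightarrow> 'n \<Rightarrow> 'n \<Rightarrow> complex) \<Rightarrow> bool" where
  "is_simple_lie c \<longleftrightarrow> is_lie_algebra c \<and> (\<exists>x y. lie_br c x y \<noteq> 0) \<and>
     (\<forall>I. is_cideal c I \<longrightarrow> I = {0} \<or> I = UNIV)"

text \<open>Matrix of ad x: (ad x)_{k l} = [x, e_l]_k.\<close>
definition ad_mat :: "('n::finite \<Rightarrow> 'n \<Rightarrow> 'n \<Rightarrow> complex) \<Rightarrow> complex^'n \<Rightarrow> complex^'n^'n" where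
  "ad_mat c x = (\<chi> k l. \<Sum>i\<in>UNIV. x$i * c i l k)"

definition kappa :: "('n::finite \<Rightarrow> 'n \<Rightarrow> 'n \<Rightarrow> complex) \<Rightarrow> complex^'n \<Rightarrow> complex^'n \<Rightarrow> complex" where
  "kappa c x y = - trace (ad_mat c x ** ad_mat c y)"

definition is_real_form_inv :: "('n::finite \<Rightarrow> 'n \<Rightarrow> 'n \<Rightarrow> complex) \<Rightarrow> (complex^'n \<Rightarrow> complex^'n) \<Rightarrow> bool" where
  "is_real_form_inv c \<tau> \<longleftrightarrow> (\<forall>x. \<tau> (\<tau> x) = x) \<and> (\<forall>x y. \<tau> (x + y) = \<tau> x + \<tau> y)
     \<and> (\<forall>a x. \<tau> (a *s x) = cnj a *s \<tau> x) \<and> (\<forall>x y. \<tau> (lie_br c x y) = lie_br c (\<tau> x) (\<tau> y))"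

definition is_eta :: "(nat \<Rightarrow> complex) \<Rightarrow> nat \<Rightarrow> (nat \<Rightarrow> complex) \<Rightarrow> bool" where
  "is_eta l m \<eta> \<longleftrightarrow> (\<forall>q<m. \<forall>r<m. (\<Sum>p=0..m-1-r. \<eta> (p+q) * l (p+r)) = (if q = r then 1 else 0))"

definition intk :: "real measure \<Rightarrow> (complex^'n \<Rightarrow> complex^'n \<Rightarrow> complex)
    \<Rightarrow> (real \<Rightarrow> complex^'n) \<Rightarrow> (real \<Rightarrow> complex^'n) \<Rightarrow> complex" where
  "intk M k f g = (LINT x|M. k (f x) (g x))"

definition gaudin_lax :: "'s set \<Rightarrow> ('s \<Rightarrow> nat) \<Rightarrow> ('s \<Rightarrow> complex) \<Rightarrow> ('s \<Rightarrow> nat \<Rightarrow> real \<Rightarrow> complex^'n)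
    \<Rightarrow> complex \<Rightarrow> real \<Rightarrow> complex^'n" where
  "gaudin_lax S m z J w x = (\<Sum>\<alpha>\<in>S. \<Sum>p<m \<alpha>. (1 / (w - z \<alpha>)^(p+1)) *s J \<alpha> p x)"

definition twist :: "'s set \<Rightarrow> ('s \<Rightarrow> nat) \<Rightarrow> ('s \<Rightarrow> complex) \<Rightarrow> ('s \<Rightarrow> nat \<Rightarrow> complex) \<Rightarrow> real
    \<Rightarrow> complex \<Rightarrow> complex" where
  "twist S m z l linf w = (\<Sum>\<alpha>\<in>S. \<Sum>p<m \<alpha>. l \<alpha> p / (w - z \<alpha>)^(p+1)) - of_real linf"

definition SS_D :: "real measure \<Rightarrow> (complex^'n \<Rightarrow> complex^'n \<Rightarrow> complex) \<Rightarrow> ('s \<Rightarrow> nat)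
    \<Rightarrow> ('s \<Rightarrow> nat \<Rightarrow> complex) \<Rightarrow> ('s \<Rightarrow> nat \<Rightarrow> real \<Rightarrow> complex^'n) \<Rightarrow> 's \<Rightarrow> nat \<Rightarrow> complex" where
  "SS_D M k m \<eta> J \<alpha> p = 1/2 * (\<Sum>q<m \<alpha>. \<Sum>r<m \<alpha>.
      if p \<le> q + r then \<eta> \<alpha> (q + r - p) * intk M k (J \<alpha> q) (J \<alpha> r) else 0)"

definition SS_P :: "real measure \<Rightarrow> (complex^'n \<Rightarrow> complex^'n \<Rightarrow> complex) \<Rightarrow> 's set \<Rightarrow> ('s \<Rightarrow> nat)
    \<Rightarrow> ('s \<Rightarrow> complex) \<Rightarrow> ('s \<Rightarrow> nat \<Rightarrow> complex) \<Rightarrow> ('s \<Rightarrow> nat \<Rightarrow> real \<Rightarrow> complex^'n) \<Rightarrow> complex \<Rightarrow> complex" where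
  "SS_P M k S m z \<eta> J w = (\<Sum>\<alpha>\<in>S. \<Sum>p<m \<alpha>. SS_D M k m \<eta> J \<alpha> p / (w - z \<alpha>)^(p+1))"

definition ham_H :: "real measure \<Rightarrow> (complex^'n \<Rightarrow> complex^'n \<Rightarrow> complex) \<Rightarrow> 's set \<Rightarrow> ('s \<Rightarrow> nat)
    \<Rightarrow> ('s \<Rightarrow> complex) \<Rightarrow> ('s \<Rightarrow> nat \<Rightarrow> complex) \<Rightarrow> real \<Rightarrow> ('s \<Rightarrow> nat \<Rightarrow> complex)
    \<Rightarrow> ('s \<Rightarrow> nat \<Rightarrow> real \<Rightarrow> complex^'n) \<Rightarrow> complex \<Rightarrow> complex" where
  "ham_H M k S m z l linf \<eta> J w =
     1/2 * intk M k (gaudin_lax S m z J w) (gaudin_lax S m z J w)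
     - twist S m z l linf w * SS_P M k S m z \<eta> J w"

end

theory Submission imports Defs begin

lemma kappa_add_left: "kappa c (x + y) w = kappa c x w + kappa c y w"
  unfolding kappa_def trace_def matrix_matrix_mult_def ad_mat_def
  by (simp add: distrib_right sum.distrib sum_negf)

lemma kappa_add_right: "kappa c w (x + y) = kappa c w x + kappa c w y"
  unfolding kappa_def trace_def matrix_matrix_mult_def ad_mat_def
  by (simp add: distrib_right distrib_left sum.distrib sum_negf)

lemma kappa_scale_left: "kappa c (a *s x) w = a * kappa c x w"
  unfolding kappa_def trace_def matrix_matrix_mult_def ad_mat_def
  by (simp add: sum_distrib_left sum_distrib_right mult_ac sum_negf)

lemma kappa_scale_right: "kappa c w (a *s x) = a * kappa c w x"
  unfolding kappa_def trace_def matrix_matrix_mult_def ad_mat_def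
  by (simp add: sum_distrib_left sum_distrib_right mult_ac sum_negf)

lemma kappa_zero_left: "kappa c 0 w = 0"
  using kappa_scale_left[of c 0 0 w] by simp
lemma kappa_zero_right: "kappa c w 0 = 0"
  using kappa_scale_right[of c w 0 0] by simp

lemma kappa_sum_left: "kappa c (\<Sum>i\<in>I. f i) w = (\<Sum>i\<in>I. kappa c (f i) w)"
  by (induction I rule: infinite_finite_induct) (auto simp: kappa_zero_left kappa_add_left)
lemma kappa_sum_right: "kappa c w (\<Sum>i\<in>I. f i) = (\<Sum>i\<in>I. kappa c w (f i))"
  by (induction I rule: infinite_finite_induct) (auto simp: kappa_zero_right kappa_add_right)


lemma sigma_lemma:
  assumes eta: "is_eta L m E" and m1: "1 \<le> m" and hN: "m - 1 \<le> N" and hT: "T \<le> 2*m - 2"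
  shows "(\<Sum>s<m. if s \<le> N \<and> N - s < m \<and> s \<le> T then L (N - s) * E (T - s) else 0)
         = (if T = N then 1 else 0)"
proof -
  define k where "k = min T (m - 1)"
  show ?thesis
  proof (cases "N - k < m")
    case False
    have "\<forall>s<m. \<not> (s \<le> N \<and> N - s < m \<and> s \<le> T)"
      using False unfolding k_def by auto
    moreover have "T \<noteq> N" using False hT hN m1 unfolding k_def by auto
    ultimately show ?thesis by (intro trans[OF sum.neutral]) auto
  next
    case True
    define r where "r = N - k"
    define q where "q = T - k"
    have rm: "r < m" using True r_def by simp
    have qm: "q < m" using hT m1 unfolding q_def k_def by auto
    have E: "(\<Sum>p=0..m-1-r. E (p+q) * L (p+r)) = (if q = r then 1 else 0)"
      using eta rm qm unfolding is_eta_def by blast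
    have qr: "(q = r) = (T = N)" using hN unfolding q_def r_def k_def by auto
    have "(\<Sum>s<m. if s \<le> N \<and> N - s < m \<and> s \<le> T then L (N - s) * E (T - s) else 0)
        = (\<Sum>s\<in>{s\<in>{..<m}. s \<le> N \<and> N - s < m \<and> s \<le> T}. L (N - s) * E (T - s))"
      by (rule sum.inter_filter[symmetric]) simp
    also have "{s\<in>{..<m}. s \<le> N \<and> N - s < m \<and> s \<le> T} = {N+1-m..k}"
      using hN m1 unfolding k_def by auto
    also have "(\<Sum>s\<in>{N+1-m..k}. L (N - s) * E (T - s)) = (\<Sum>p=0..m-1-r. E (p+q) * L (p+r))"
    proof (rule sum.reindex_bij_witness[where i="\<lambda>p. k - p" and j="\<lambda>s. k - s"])
      show "\<And>a. a \<in> {N + 1 - m..k} \<Longrightarrow> k - (k - a) = a" by auto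
      show "\<And>a. a \<in> {N + 1 - m..k} \<Longrightarrow> k - a \<in> {0..m - 1 - r}"
        using hN m1 rm unfolding r_def k_def by (auto simp: min_def)
      show "\<And>b. b \<in> {0..m - 1 - r} \<Longrightarrow> k - (k - b) = b"
        using hN m1 rm unfolding r_def k_def by (auto simp: min_def)
      show "\<And>b. b \<in> {0..m - 1 - r} \<Longrightarrow> k - b \<in> {N + 1 - m..k}"
        using hN m1 rm unfolding r_def k_def by (auto simp: min_def)
      show "\<And>a. a \<in> {N + 1 - m..k} \<Longrightarrow> E (k - a + q) * L (k - a + r) = L (N - a) * E (T - a)"
      proof -
        fix a assume a: "a \<in> {N + 1 - m..k}"
        have "k - a + q = T - a" "k - a + r = N - a"
          using a hN m1 rm unfolding r_def q_def k_def by (auto simp: min_def)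
        then show "E (k - a + q) * L (k - a + r) = L (N - a) * E (T - a)" by simp
      qed
    qed
    finally show ?thesis using E qr by simp
  qed
qed


lemma sum_delta_nat:
  "(\<Sum>p<m. if p + s = (N::nat) then f p else 0) = (if s \<le> N \<and> N - s < m then f (N - s) else (0::'a::comm_monoid_add))"
proof -
  have "(\<Sum>p<m. if p + s = N then f p else 0) = (\<Sum>p<m. if p = N - s then (if s \<le> N then f p else 0) else 0)"
    by (rule sum.cong) auto
  also have "\<dots> = (if s \<le> N \<and> N - s < m then f (N - s) else 0)"
    by (subst sum.delta) auto
  finally show ?thesis .
qed

lemma swap3:
  "(\<Sum>s\<in>A. \<Sum>q\<in>B. \<Sum>r\<in>C. h s q r) = (\<Sum>q\<in>B. \<Sum>r\<in>C. \<Sum>s\<in>A. (h s q r :: 'a::comm_monoid_add))"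
  by (subst sum.swap) (simp add: sum.swap[of _ A C])

lemma coeff_zero:
  fixes K :: "nat \<Rightarrow> nat \<Rightarrow> complex"
  assumes eta: "is_eta L m E" and m1: "1 \<le> m" and hN: "m - 1 \<le> N"
  and D: "\<And>s. D s = 1/2 * (\<Sum>q<m. \<Sum>r<m. if s \<le> q+r then E(q+r-s) * K q r else 0)"
  shows "(\<Sum>p<m. \<Sum>q<m. if p+q = N then K p q / 2 - L p * D q else 0) = 0"
proof -
  have split: "(\<Sum>p<m. \<Sum>q<m. if p+q = N then K p q / 2 - L p * D q else 0)
     = 1/2 * (\<Sum>p<m. \<Sum>q<m. if p+q = N then K p q else 0)
       - (\<Sum>p<m. \<Sum>s<m. if p+s = N then L p * D s else 0)"
    by (simp add: sum_distrib_left sum_subtractf[symmetric] if_distrib if_distribR cong: if_cong)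
  have "(\<Sum>p<m. \<Sum>s<m. if p+s = N then L p * D s else 0)
      = (\<Sum>s<m. \<Sum>p<m. if p+s = N then L p * D s else 0)"
    by (rule sum.swap)
  also have "\<dots> = (\<Sum>s<m. if s \<le> N \<and> N - s < m then L (N - s) * D s else 0)"
    by (simp add: sum_delta_nat)
  also have "\<dots> = (\<Sum>s<m. \<Sum>q<m. \<Sum>r<m. 1/2 * K q r *
        (if s \<le> N \<and> N - s < m \<and> s \<le> q + r then L (N - s) * E (q + r - s) else 0))"
    by (rule sum.cong[OF refl]) (auto simp: D sum_distrib_left sum_distrib_right mult_ac intro!: sum.cong)
  also have "\<dots> = (\<Sum>q<m. \<Sum>r<m. \<Sum>s<m. 1/2 * K q r *
        (if s \<le> N \<and> N - s < m \<and> s \<le> q + r then L (N - s) * E (q + r - s) else 0))"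
    by (rule swap3)
  also have "\<dots> = (\<Sum>q<m. \<Sum>r<m. 1/2 * K q r * (if q + r = N then 1 else 0))"
    by (intro sum.cong refl, simp only: sum_distrib_left[symmetric],
        subst sigma_lemma[OF eta m1 hN]) auto
  also have "\<dots> = 1/2 * (\<Sum>p<m. \<Sum>q<m. if p+q = N then K p q else 0)"
    by (simp add: sum_distrib_left if_distrib cong: if_cong)
  finally show ?thesis using split by simp
qed


lemma swap3':
  "(\<Sum>s\<in>A. \<Sum>q\<in>B. \<Sum>r\<in>C. h s q r) = (\<Sum>r\<in>C. \<Sum>s\<in>A. \<Sum>q\<in>B. (h s q r :: 'a::comm_monoid_add))"
proof -
  have "(\<Sum>s\<in>A. \<Sum>q\<in>B. \<Sum>r\<in>C. h s q r) = (\<Sum>s\<in>A. \<Sum>r\<in>C. \<Sum>q\<in>B. h s q r)"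
    by (intro sum.cong refl sum.swap)
  also have "\<dots> = (\<Sum>r\<in>C. \<Sum>s\<in>A. \<Sum>q\<in>B. h s q r)" by (rule sum.swap)
  finally show ?thesis .
qed

definition Rp :: "complex \<Rightarrow> nat \<Rightarrow> (complex \<Rightarrow> complex) \<Rightarrow> bool" where
  "Rp z0 m f \<longleftrightarrow> (\<exists>a. ((\<lambda>w. (w - z0)^m * f w) \<longlongrightarrow> a) (at z0))"

definition Tl :: "complex \<Rightarrow> (complex \<Rightarrow> complex) \<Rightarrow> bool" where
  "Tl z0 f \<longleftrightarrow> (\<exists>b. (f \<longlongrightarrow> b) (at z0))"

lemma Tl_const: "Tl z0 (\<lambda>w. c)" unfolding Tl_def by (rule exI, rule tendsto_const)
lemma Tl_mult: "Tl z0 f \<Longrightarrow> Tl z0 g \<Longrightarrow> Tl z0 (\<lambda>w. f w * g w)"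
  unfolding Tl_def by (auto intro: tendsto_mult)
lemma Tl_e: "z1 \<noteq> z0 \<Longrightarrow> Tl z0 (\<lambda>w. 1 / (w - z1)^(p+1))"
  unfolding Tl_def by (rule exI[of _ "1/(z0 - z1)^(p+1)"], intro tendsto_intros) auto

lemma Rp_add: "Rp z0 m f \<Longrightarrow> Rp z0 m g \<Longrightarrow> Rp z0 m (\<lambda>w. f w + g w)"
  unfolding Rp_def by (auto simp: distrib_left intro: tendsto_add)
lemma Rp_diff: "Rp z0 m f \<Longrightarrow> Rp z0 m g \<Longrightarrow> Rp z0 m (\<lambda>w. f w - g w)"
  unfolding Rp_def by (auto simp: right_diff_distrib intro: tendsto_diff)
lemma Rp_cmult: "Rp z0 m f \<Longrightarrow> Rp z0 m (\<lambda>w. c * f w)"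
  unfolding Rp_def
proof (elim exE)
  fix a assume "((\<lambda>w. (w - z0)^m * f w) \<longlongrightarrow> a) (at z0)"
  then have "((\<lambda>w. c * ((w - z0)^m * f w)) \<longlongrightarrow> c * a) (at z0)" by (intro tendsto_mult tendsto_const)
  then show "\<exists>a. ((\<lambda>w. (w - z0) ^ m * (c * f w)) \<longlongrightarrow> a) (at z0)" by (auto simp: mult_ac)
qed
lemma Rp_zero: "Rp z0 m (\<lambda>w. 0)" unfolding Rp_def by (auto intro: exI tendsto_const)
lemma Rp_sum: "(\<And>i. i \<in> I \<Longrightarrow> Rp z0 m (f i)) \<Longrightarrow> Rp z0 m (\<lambda>w. \<Sum>i\<in>I. f i w)"
proof (induction I rule: infinite_finite_induct)
  case (infinite A) then show ?case by (simp add: Rp_zero)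
next
  case empty then show ?case by (simp add: Rp_zero)
next
  case (insert x F) then show ?case by (simp add: Rp_add)
qed
lemma Rp_cong: "Rp z0 m f \<Longrightarrow> (\<And>w. f w = g w) \<Longrightarrow> Rp z0 m g"
  by (metis ext)
lemma Rp_T: "Tl z0 f \<Longrightarrow> Rp z0 m f"
  unfolding Rp_def Tl_def
proof (elim exE)
  fix b assume "(f \<longlongrightarrow> b) (at z0)"
  then have "((\<lambda>w. (w - z0)^m * f w) \<longlongrightarrow> (z0 - z0)^m * b) (at z0)" by (intro tendsto_intros)
  then show "\<exists>a. ((\<lambda>w. (w - z0) ^ m * f w) \<longlongrightarrow> a) (at z0)" by blast
qed

lemma ev_neq: "\<forall>\<^sub>F w in at z0. w \<noteq> (z0::complex)"
  by (simp add: eventually_at_filter)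

lemma Rp_e: assumes "p < m" "Tl z0 g" shows "Rp z0 m (\<lambda>w. 1 / (w - z0)^(p+1) * g w)"
proof -
  obtain b where b: "(g \<longlongrightarrow> b) (at z0)" using assms(2) unfolding Tl_def by blast
  have lim: "((\<lambda>w. (w - z0)^(m - (p+1)) * g w) \<longlongrightarrow> (z0 - z0)^(m - (p+1)) * b) (at z0)"
    by (intro tendsto_intros b)
  have eq: "(w - z0)^(m - (p+1)) * g w = (w - z0)^m * (1 / (w - z0)^(p+1) * g w)" if "w \<noteq> z0" for w
  proof -
    have "m = (m - (p+1)) + (p+1)" using assms(1) by simp
    then have "(w - z0)^m = (w - z0)^(m - (p+1)) * (w - z0)^(p+1)" by (metis power_add)
    then show ?thesis using that by simp
  qed
  have "((\<lambda>w. (w - z0)^m * (1 / (w - z0)^(p+1) * g w)) \<longlongrightarrow> (z0 - z0)^(m - (p+1)) * b) (at z0)"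
    by (rule Lim_transform_eventually[OF lim], rule eventually_mono[OF ev_neq[of z0]], rule eq)
  then show ?thesis unfolding Rp_def by blast
qed

lemma Rp_e': assumes "p < m" "Tl z0 g" shows "Rp z0 m (\<lambda>w. g w * (1 / (w - z0)^(p+1)))"
  using Rp_e[OF assms] by (simp add: mult.commute)

lemma Rp_core:
  fixes a :: "nat \<Rightarrow> nat \<Rightarrow> complex"
  assumes c0: "\<And>N. m - 1 \<le> N \<Longrightarrow> (\<Sum>p<m. \<Sum>q<m. if p+q = N then a p q else 0) = 0"
  shows "Rp z0 m (\<lambda>w. \<Sum>p<m. \<Sum>q<m. a p q * (1/(w - z0)^(p+1) * (1/(w - z0)^(q+1))))"
proof -
  define c where "c N = (\<Sum>p<m. \<Sum>q<m. if p+q = N then a p q else 0)" for N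
  define g where "g w = (\<Sum>N<m-1. (w - z0)^(m - (N+2)) * c N)" for w
  have lim: "(g \<longlongrightarrow> g z0) (at z0)" unfolding g_def by (intro tendsto_intros)
  have eq: "g w = (w - z0)^m * (\<Sum>p<m. \<Sum>q<m. a p q * (1/(w - z0)^(p+1) * (1/(w - z0)^(q+1))))"
    if "w \<noteq> z0" for w
  proof -
    define u where "u = w - z0"
    have u: "u \<noteq> 0" using that u_def by simp
    have "(\<Sum>p<m. \<Sum>q<m. a p q * (1/u^(p+1) * (1/u^(q+1))))
        = (\<Sum>p<m. \<Sum>q<m. a p q * (1/u^(p+q+2)))"
      by (intro sum.cong refl) (simp add: power_add)
    also have "\<dots> = (\<Sum>p<m. \<Sum>q<m. \<Sum>N<2*m. if N = p + q then a p q * (1/u^(N+2)) else 0)"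
      by (intro sum.cong refl) (simp add: sum.delta)
    also have "\<dots> = (\<Sum>N<2*m. \<Sum>p<m. \<Sum>q<m. if N = p + q then a p q * (1/u^(N+2)) else 0)"
      by (rule swap3')
    also have "\<dots> = (\<Sum>N<2*m. (1/u^(N+2)) * c N)"
      unfolding c_def by (intro sum.cong refl) (auto simp: sum_distrib_left intro!: sum.cong)
    also have "\<dots> = (\<Sum>N<m-1. (1/u^(N+2)) * c N)"
      by (rule sum.mono_neutral_right) (auto simp: c_def c0)
    finally have "u^m * (\<Sum>p<m. \<Sum>q<m. a p q * (1/u^(p+1) * (1/u^(q+1))))
        = (\<Sum>N<m-1. u^m * (1/u^(N+2)) * c N)" by (simp add: sum_distrib_left mult.assoc)
    also have "\<dots> = (\<Sum>N<m-1. u^(m - (N+2)) * c N)"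
    proof (intro sum.cong refl)
      fix N assume "N \<in> {..<m-1}"
      then have "m = (m - (N+2)) + (N+2)" by auto
      then have "u^m = u^(m - (N+2)) * u^(N+2)" by (metis power_add)
      then show "u^m * (1/u^(N+2)) * c N = u^(m - (N+2)) * c N" using u by simp
    qed
    finally show ?thesis unfolding g_def u_def by simp
  qed
  have "((\<lambda>w. (w - z0)^m * (\<Sum>p<m. \<Sum>q<m. a p q * (1/(w - z0)^(p+1) * (1/(w - z0)^(q+1))))) \<longlongrightarrow> g z0) (at z0)"
    by (rule Lim_transform_eventually[OF lim], rule eventually_mono[OF ev_neq[of z0]], rule eq)
  then show ?thesis unfolding Rp_def by blast
qed


lemma split4:
  fixes G :: "'s \<Rightarrow> nat \<Rightarrow> 's \<Rightarrow> nat \<Rightarrow> complex"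
  assumes fin: "finite S" and aS: "\<alpha> \<in> S"
  shows "(\<Sum>\<beta>\<in>S. \<Sum>p<m \<beta>. \<Sum>\<gamma>\<in>S. \<Sum>q<m \<gamma>. G \<beta> p \<gamma> q)
       = (\<Sum>p<m \<alpha>. \<Sum>q<m \<alpha>. G \<alpha> p \<alpha> q)
         + (\<Sum>\<beta>\<in>S. \<Sum>p<m \<beta>. \<Sum>\<gamma>\<in>S. \<Sum>q<m \<gamma>. if \<beta> = \<alpha> \<and> \<gamma> = \<alpha> then 0 else G \<beta> p \<gamma> q)"
proof -
  have "(\<Sum>\<beta>\<in>S. \<Sum>p<m \<beta>. \<Sum>\<gamma>\<in>S. \<Sum>q<m \<gamma>. G \<beta> p \<gamma> q)
     = (\<Sum>\<beta>\<in>S. \<Sum>p<m \<beta>. \<Sum>\<gamma>\<in>S. \<Sum>q<m \<gamma>. (if \<beta> = \<alpha> \<and> \<gamma> = \<alpha> then G \<beta> p \<gamma> q else 0)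
          + (if \<beta> = \<alpha> \<and> \<gamma> = \<alpha> then 0 else G \<beta> p \<gamma> q))"
    by (intro sum.cong refl) auto
  also have "\<dots> = (\<Sum>\<beta>\<in>S. \<Sum>p<m \<beta>. \<Sum>\<gamma>\<in>S. \<Sum>q<m \<gamma>. (if \<beta> = \<alpha> \<and> \<gamma> = \<alpha> then G \<beta> p \<gamma> q else 0))
       + (\<Sum>\<beta>\<in>S. \<Sum>p<m \<beta>. \<Sum>\<gamma>\<in>S. \<Sum>q<m \<gamma>. if \<beta> = \<alpha> \<and> \<gamma> = \<alpha> then 0 else G \<beta> p \<gamma> q)"
    by (simp only: sum.distrib)
  also have "(\<Sum>\<beta>\<in>S. \<Sum>p<m \<beta>. \<Sum>\<gamma>\<in>S. \<Sum>q<m \<gamma>. (if \<beta> = \<alpha> \<and> \<gamma> = \<alpha> then G \<beta> p \<gamma> q else 0))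
      = (\<Sum>\<beta>\<in>S. if \<beta> = \<alpha> then (\<Sum>p<m \<alpha>. \<Sum>\<gamma>\<in>S. if \<gamma> = \<alpha> then (\<Sum>q<m \<alpha>. G \<alpha> p \<alpha> q) else 0) else 0)"
    by (auto intro!: sum.cong)
  also have "\<dots> = (\<Sum>p<m \<alpha>. \<Sum>q<m \<alpha>. G \<alpha> p \<alpha> q)"
    using fin aS by (simp add: sum.delta)
  finally show ?thesis .
qed

lemma Rp_rest:
  fixes F :: "'s \<Rightarrow> nat \<Rightarrow> 's \<Rightarrow> nat \<Rightarrow> complex"
  assumes aS: "\<alpha> \<in> S" and inj: "inj_on z S"
  shows "Rp (z \<alpha>) (m \<alpha>) (\<lambda>w. \<Sum>\<beta>\<in>S. \<Sum>p<m \<beta>. \<Sum>\<gamma>\<in>S. \<Sum>q<m \<gamma>.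
           if \<beta> = \<alpha> \<and> \<gamma> = \<alpha> then 0 else F \<beta> p \<gamma> q * (1/(w - z \<beta>)^(p+1) * (1/(w - z \<gamma>)^(q+1))))"
proof (intro Rp_sum)
  fix \<beta> p \<gamma> q assume b: "\<beta> \<in> S" and p: "p \<in> {..<m \<beta>}" and g: "\<gamma> \<in> S" and q: "q \<in> {..<m \<gamma>}"
  have zb: "\<beta> \<noteq> \<alpha> \<Longrightarrow> z \<beta> \<noteq> z \<alpha>" using inj aS b by (auto dest: inj_onD)
  have zg: "\<gamma> \<noteq> \<alpha> \<Longrightarrow> z \<gamma> \<noteq> z \<alpha>" using inj aS g by (auto dest: inj_onD)
  show "Rp (z \<alpha>) (m \<alpha>) (\<lambda>w. if \<beta> = \<alpha> \<and> \<gamma> = \<alpha> then 0 else F \<beta> p \<gamma> q * (1/(w - z \<beta>)^(p+1) * (1/(w - z \<gamma>)^(q+1))))"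
  proof (cases "\<beta> = \<alpha>")
    case True
    then have "\<gamma> \<noteq> \<alpha> \<or> \<gamma> = \<alpha>" by blast
    then show ?thesis
    proof
      assume ga: "\<gamma> \<noteq> \<alpha>"
      have "Rp (z \<alpha>) (m \<alpha>) (\<lambda>w. 1/(w - z \<alpha>)^(p+1) * (F \<beta> p \<gamma> q * (1/(w - z \<gamma>)^(q+1))))"
        using p True by (intro Rp_e Tl_mult Tl_const Tl_e zg ga) auto
      then show ?thesis using True ga by (simp add: mult_ac)
    next
      assume "\<gamma> = \<alpha>" then show ?thesis using True by (simp add: Rp_zero)
    qed
  next
    case False
    show ?thesis
    proof (cases "\<gamma> = \<alpha>")
      case True
      have "Rp (z \<alpha>) (m \<alpha>) (\<lambda>w. 1/(w - z \<alpha>)^(q+1) * (F \<beta> p \<gamma> q * (1/(w - z \<beta>)^(p+1))))"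
        using q True by (intro Rp_e Tl_mult Tl_const Tl_e zb False) auto
      then show ?thesis using True False by (simp add: mult_ac)
    next
      case False2: False
      have "Rp (z \<alpha>) (m \<alpha>) (\<lambda>w. F \<beta> p \<gamma> q * (1/(w - z \<beta>)^(p+1) * (1/(w - z \<gamma>)^(q+1))))"
        by (intro Rp_T Tl_mult Tl_const Tl_e zb zg False False2)
      then show ?thesis using False by simp
    qed
  qed
qed


lemma integral_sum4:
  fixes f :: "'s \<Rightarrow> nat \<Rightarrow> 's \<Rightarrow> nat \<Rightarrow> real \<Rightarrow> complex"
  assumes I: "\<And>\<beta> p \<gamma> q. \<beta> \<in> S \<Longrightarrow> p < m \<beta> \<Longrightarrow> \<gamma> \<in> S \<Longrightarrow> q < m \<gamma> \<Longrightarrow> integrable M (f \<beta> p \<gamma> q)"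
  shows "(integral\<^sup>L M (\<lambda>x. \<Sum>\<beta>\<in>S. \<Sum>p<m \<beta>. \<Sum>\<gamma>\<in>S. \<Sum>q<m \<gamma>. a \<beta> p \<gamma> q * f \<beta> p \<gamma> q x))
       = (\<Sum>\<beta>\<in>S. \<Sum>p<m \<beta>. \<Sum>\<gamma>\<in>S. \<Sum>q<m \<gamma>. a \<beta> p \<gamma> q * (integral\<^sup>L M (\<lambda>x. f \<beta> p \<gamma> q x)))"
proof -
  have i4: "\<And>\<beta> p \<gamma>. \<beta> \<in> S \<Longrightarrow> p < m \<beta> \<Longrightarrow> \<gamma> \<in> S \<Longrightarrow> (integral\<^sup>L M (\<lambda>x. \<Sum>q<m \<gamma>. a \<beta> p \<gamma> q * f \<beta> p \<gamma> q x))
       = (\<Sum>q<m \<gamma>. a \<beta> p \<gamma> q * (integral\<^sup>L M (\<lambda>x. f \<beta> p \<gamma> q x)))"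
    by (subst Bochner_Integration.integral_sum) (auto intro!: I)
  have i3: "\<And>\<beta> p. \<beta> \<in> S \<Longrightarrow> p < m \<beta> \<Longrightarrow> (integral\<^sup>L M (\<lambda>x. \<Sum>\<gamma>\<in>S. \<Sum>q<m \<gamma>. a \<beta> p \<gamma> q * f \<beta> p \<gamma> q x))
       = (\<Sum>\<gamma>\<in>S. \<Sum>q<m \<gamma>. a \<beta> p \<gamma> q * (integral\<^sup>L M (\<lambda>x. f \<beta> p \<gamma> q x)))"
    by (subst Bochner_Integration.integral_sum) (auto intro!: I i4 sum.cong integrable_sum integrable_mult_right)
  have int3: "\<And>\<beta> p. \<beta> \<in> S \<Longrightarrow> p < m \<beta> \<Longrightarrow> integrable M (\<lambda>x. \<Sum>\<gamma>\<in>S. \<Sum>q<m \<gamma>. a \<beta> p \<gamma> q * f \<beta> p \<gamma> q x)"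
    by (intro Bochner_Integration.integrable_sum integrable_mult_right I) auto
  have int2: "\<And>\<beta>. \<beta> \<in> S \<Longrightarrow> integrable M (\<lambda>x. \<Sum>p<m \<beta>. \<Sum>\<gamma>\<in>S. \<Sum>q<m \<gamma>. a \<beta> p \<gamma> q * f \<beta> p \<gamma> q x)"
    by (intro Bochner_Integration.integrable_sum int3) auto
  have i2: "\<And>\<beta>. \<beta> \<in> S \<Longrightarrow> (integral\<^sup>L M (\<lambda>x. \<Sum>p<m \<beta>. \<Sum>\<gamma>\<in>S. \<Sum>q<m \<gamma>. a \<beta> p \<gamma> q * f \<beta> p \<gamma> q x))
       = (\<Sum>p<m \<beta>. \<Sum>\<gamma>\<in>S. \<Sum>q<m \<gamma>. a \<beta> p \<gamma> q * (integral\<^sup>L M (\<lambda>x. f \<beta> p \<gamma> q x)))"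
    by (subst Bochner_Integration.integral_sum) (auto intro!: int3 i3 sum.cong)
  show ?thesis
    by (subst Bochner_Integration.integral_sum) (auto intro!: int2 i2 sum.cong)
qed

theorem propositionA1:
  fixes c :: "'n::finite \<Rightarrow> 'n \<Rightarrow> 'n \<Rightarrow> complex"
    and \<tau> :: "complex^'n \<Rightarrow> complex^'n"
    and S :: "'s set" and cj :: "'s \<Rightarrow> 's"
    and m :: "'s \<Rightarrow> nat" and l :: "'s \<Rightarrow> nat \<Rightarrow> complex" and linf :: real
    and z :: "'s \<Rightarrow> complex" and \<eta> :: "'s \<Rightarrow> nat \<Rightarrow> complex"
    and J :: "'s \<Rightarrow> nat \<Rightarrow> real \<Rightarrow> complex^'n"
    and M :: "real measure"
  assumes simple: "is_simple_lie c"
    and realform: "is_real_form_inv c \<tau>"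
    and fin: "finite S"
    and cj_in: "\<forall>\<alpha>\<in>S. cj \<alpha> \<in> S" and cj_inv: "\<forall>\<alpha>\<in>S. cj (cj \<alpha>) = \<alpha>"
    and m_pos: "\<forall>\<alpha>\<in>S. 1 \<le> m \<alpha>" and m_cj: "\<forall>\<alpha>\<in>S. m (cj \<alpha>) = m \<alpha>"
    and l_cj: "\<forall>\<alpha>\<in>S. \<forall>p<m \<alpha>. l (cj \<alpha>) p = cnj (l \<alpha> p)"
    and l_top: "\<forall>\<alpha>\<in>S. l \<alpha> (m \<alpha> - 1) \<noteq> 0"
    and z_cj: "\<forall>\<alpha>\<in>S. z (cj \<alpha>) = cnj (z \<alpha>)"
    and z_inj: "inj_on z S"
    and linf_nz: "linf \<noteq> 0"
    and eta: "\<forall>\<alpha>\<in>S. is_eta (l \<alpha>) (m \<alpha>) (\<eta> \<alpha>)"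
    and domain: "M = lborel \<or> (\<exists>L>0. M = restrict_space lborel {0..<L})"
    and J_real: "\<forall>\<alpha>\<in>S. \<forall>p<m \<alpha>. \<forall>x. \<tau> (J \<alpha> p x) = J (cj \<alpha>) p x"
    and J_int: "\<forall>\<alpha>\<in>S. \<forall>\<beta>\<in>S. \<forall>p<m \<alpha>. \<forall>q<m \<beta>.
                  integrable M (\<lambda>x. kappa c (J \<alpha> p x) (J \<beta> q x))"
  shows "\<forall>\<alpha>\<in>S. \<exists>a. ((\<lambda>w. (w - z \<alpha>)^(m \<alpha>) * ham_H M (kappa c) S m z l linf \<eta> J w)
                    \<longlongrightarrow> a) (at (z \<alpha>))"
proof (intro ballI)
  fix \<alpha> assume aS: "\<alpha> \<in> S"
  define e where "e \<beta> p w = 1 / (w - z \<beta>)^(p+1)" for \<beta> p and w :: complex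
  define Kf where "Kf \<beta> p \<gamma> q = intk M (kappa c) (J \<beta> p) (J \<gamma> q)" for \<beta> p \<gamma> q
  define Dd where "Dd \<beta> s = SS_D M (kappa c) m \<eta> J \<beta> s" for \<beta> s
  have Jint: "\<And>\<beta> \<gamma> p q. \<beta> \<in> S \<Longrightarrow> \<gamma> \<in> S \<Longrightarrow> p < m \<beta> \<Longrightarrow> q < m \<gamma> \<Longrightarrow>
      integrable M (\<lambda>x. kappa c (J \<beta> p x) (J \<gamma> q x))" using J_int by blast
  have E1: "intk M (kappa c) (gaudin_lax S m z J w) (gaudin_lax S m z J w)
      = (\<Sum>\<beta>\<in>S. \<Sum>p<m \<beta>. \<Sum>\<gamma>\<in>S. \<Sum>q<m \<gamma>. Kf \<beta> p \<gamma> q * (e \<beta> p w * e \<gamma> q w))" for w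
  proof -
    have "\<And>x. kappa c (gaudin_lax S m z J w x) (gaudin_lax S m z J w x)
       = (\<Sum>\<beta>\<in>S. \<Sum>p<m \<beta>. \<Sum>\<gamma>\<in>S. \<Sum>q<m \<gamma>. (e \<beta> p w * e \<gamma> q w) * kappa c (J \<beta> p x) (J \<gamma> q x))"
      unfolding gaudin_lax_def
      apply (simp only: kappa_sum_left kappa_scale_left)
      apply (simp only: kappa_sum_right kappa_scale_right)
      apply (simp add: sum_distrib_left e_def mult.assoc)
      done
    then have "intk M (kappa c) (gaudin_lax S m z J w) (gaudin_lax S m z J w)
      = (LINT x|M. (\<Sum>\<beta>\<in>S. \<Sum>p<m \<beta>. \<Sum>\<gamma>\<in>S. \<Sum>q<m \<gamma>. (e \<beta> p w * e \<gamma> q w) * kappa c (J \<beta> p x) (J \<gamma> q x)))"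
      unfolding intk_def by simp
    also have "\<dots> = (\<Sum>\<beta>\<in>S. \<Sum>p<m \<beta>. \<Sum>\<gamma>\<in>S. \<Sum>q<m \<gamma>. (e \<beta> p w * e \<gamma> q w) * (LINT x|M. kappa c (J \<beta> p x) (J \<gamma> q x)))"
      by (rule integral_sum4) (auto intro: Jint)
    finally show ?thesis unfolding Kf_def intk_def by (simp add: mult_ac)
  qed
  have E2: "twist S m z l linf w = (\<Sum>\<beta>\<in>S. \<Sum>p<m \<beta>. l \<beta> p * e \<beta> p w) - linf" for w
    unfolding twist_def e_def by simp
  have E3: "SS_P M (kappa c) S m z \<eta> J w = (\<Sum>\<gamma>\<in>S. \<Sum>s<m \<gamma>. Dd \<gamma> s * e \<gamma> s w)" for w
    unfolding SS_P_def e_def Dd_def by simp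
  have LD: "(\<Sum>\<beta>\<in>S. \<Sum>p<m \<beta>. l \<beta> p * e \<beta> p w) * (\<Sum>\<gamma>\<in>S. \<Sum>s<m \<gamma>. Dd \<gamma> s * e \<gamma> s w)
     = (\<Sum>\<beta>\<in>S. \<Sum>p<m \<beta>. \<Sum>\<gamma>\<in>S. \<Sum>q<m \<gamma>. (l \<beta> p * Dd \<gamma> q) * (e \<beta> p w * e \<gamma> q w))" for w
    apply (simp only: sum_distrib_right)
    apply (simp only: sum_distrib_left)
    apply (simp add: mult_ac)
    done
  have m1: "1 \<le> m \<alpha>" using m_pos aS by blast
  have core: "Rp (z \<alpha>) (m \<alpha>) (\<lambda>w. \<Sum>p<m \<alpha>. \<Sum>q<m \<alpha>. (Kf \<alpha> p \<alpha> q / 2 - l \<alpha> p * Dd \<alpha> q) * (e \<alpha> p w * e \<alpha> q w))"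
    unfolding e_def
  proof (rule Rp_core)
    fix N assume "m \<alpha> - 1 \<le> N"
    show "(\<Sum>p<m \<alpha>. \<Sum>q<m \<alpha>. if p + q = N then Kf \<alpha> p \<alpha> q / 2 - l \<alpha> p * Dd \<alpha> q else 0) = 0"
    proof (rule coeff_zero[where E="\<eta> \<alpha>"])
      show "is_eta (l \<alpha>) (m \<alpha>) (\<eta> \<alpha>)" using eta aS by blast
      show "1 \<le> m \<alpha>" by (rule m1)
      show "m \<alpha> - 1 \<le> N" by fact
      fix s
      show "Dd \<alpha> s = 1 / 2 * (\<Sum>q<m \<alpha>. \<Sum>r<m \<alpha>. if s \<le> q + r then \<eta> \<alpha> (q + r - s) * Kf \<alpha> q \<alpha> r else 0)"
        unfolding Dd_def SS_D_def Kf_def by simp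
    qed
  qed
  have restK: "Rp (z \<alpha>) (m \<alpha>) (\<lambda>w. \<Sum>\<beta>\<in>S. \<Sum>p<m \<beta>. \<Sum>\<gamma>\<in>S. \<Sum>q<m \<gamma>.
           if \<beta> = \<alpha> \<and> \<gamma> = \<alpha> then 0 else Kf \<beta> p \<gamma> q * (e \<beta> p w * e \<gamma> q w))"
    unfolding e_def by (rule Rp_rest[OF aS z_inj])
  have restLD: "Rp (z \<alpha>) (m \<alpha>) (\<lambda>w. \<Sum>\<beta>\<in>S. \<Sum>p<m \<beta>. \<Sum>\<gamma>\<in>S. \<Sum>q<m \<gamma>.
           if \<beta> = \<alpha> \<and> \<gamma> = \<alpha> then 0 else (l \<beta> p * Dd \<gamma> q) * (e \<beta> p w * e \<gamma> q w))"
    unfolding e_def by (rule Rp_rest[OF aS z_inj])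
  have linfD: "Rp (z \<alpha>) (m \<alpha>) (\<lambda>w. of_real linf * (\<Sum>\<gamma>\<in>S. \<Sum>s<m \<gamma>. Dd \<gamma> s * e \<gamma> s w))"
  proof (rule Rp_cmult, rule Rp_sum, rule Rp_sum)
    fix \<gamma> s assume g: "\<gamma> \<in> S" and s: "s \<in> {..<m \<gamma>}"
    show "Rp (z \<alpha>) (m \<alpha>) (\<lambda>w. Dd \<gamma> s * e \<gamma> s w)"
    proof (cases "\<gamma> = \<alpha>")
      case True
      have "Rp (z \<alpha>) (m \<alpha>) (\<lambda>w. Dd \<gamma> s * (1 / (w - z \<alpha>)^(s+1)))"
        by (rule Rp_e'[OF _ Tl_const]) (use s True in auto)
      then show ?thesis unfolding e_def using True by simp
    next
      case False
      then have "z \<gamma> \<noteq> z \<alpha>" using z_inj aS g by (auto dest: inj_onD)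
      then show ?thesis unfolding e_def by (intro Rp_T Tl_mult Tl_const Tl_e)
    qed
  qed
  have HH: "ham_H M (kappa c) S m z l linf \<eta> J w =
      (\<Sum>p<m \<alpha>. \<Sum>q<m \<alpha>. (Kf \<alpha> p \<alpha> q / 2 - l \<alpha> p * Dd \<alpha> q) * (e \<alpha> p w * e \<alpha> q w))
      + 1/2 * (\<Sum>\<beta>\<in>S. \<Sum>p<m \<beta>. \<Sum>\<gamma>\<in>S. \<Sum>q<m \<gamma>.
           if \<beta> = \<alpha> \<and> \<gamma> = \<alpha> then 0 else Kf \<beta> p \<gamma> q * (e \<beta> p w * e \<gamma> q w))
      - (\<Sum>\<beta>\<in>S. \<Sum>p<m \<beta>. \<Sum>\<gamma>\<in>S. \<Sum>q<m \<gamma>.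
           if \<beta> = \<alpha> \<and> \<gamma> = \<alpha> then 0 else (l \<beta> p * Dd \<gamma> q) * (e \<beta> p w * e \<gamma> q w))
      + of_real linf * (\<Sum>\<gamma>\<in>S. \<Sum>s<m \<gamma>. Dd \<gamma> s * e \<gamma> s w)" for w
  proof -
    have c1: "(\<Sum>p<m \<alpha>. \<Sum>q<m \<alpha>. (Kf \<alpha> p \<alpha> q / 2 - l \<alpha> p * Dd \<alpha> q) * (e \<alpha> p w * e \<alpha> q w))
      = 1/2 * (\<Sum>p<m \<alpha>. \<Sum>q<m \<alpha>. Kf \<alpha> p \<alpha> q * (e \<alpha> p w * e \<alpha> q w))
        - (\<Sum>p<m \<alpha>. \<Sum>q<m \<alpha>. (l \<alpha> p * Dd \<alpha> q) * (e \<alpha> p w * e \<alpha> q w))"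
    proof -
      have "(\<Sum>p<m \<alpha>. \<Sum>q<m \<alpha>. (Kf \<alpha> p \<alpha> q / 2 - l \<alpha> p * Dd \<alpha> q) * (e \<alpha> p w * e \<alpha> q w))
        = (\<Sum>p<m \<alpha>. \<Sum>q<m \<alpha>. 1/2 * (Kf \<alpha> p \<alpha> q * (e \<alpha> p w * e \<alpha> q w)) - (l \<alpha> p * Dd \<alpha> q) * (e \<alpha> p w * e \<alpha> q w))"
        by (intro sum.cong refl) (simp add: algebra_simps)
      then show ?thesis by (simp add: sum_subtractf sum_distrib_left)
    qed
    show ?thesis
      unfolding c1 unfolding ham_H_def E1 E2 E3 left_diff_distrib LD split4[OF fin aS, where G="\<lambda>\<beta> p \<gamma> q. Kf \<beta> p \<gamma> q * (e \<beta> p w * e \<gamma> q w)"]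
         split4[OF fin aS, where G="\<lambda>\<beta> p \<gamma> q. (l \<beta> p * Dd \<gamma> q) * (e \<beta> p w * e \<gamma> q w)"]
      by (simp add: algebra_simps)
  qed
  have "Rp (z \<alpha>) (m \<alpha>) (ham_H M (kappa c) S m z l linf \<eta> J)"
    unfolding HH[abs_def] by (intro Rp_add Rp_diff Rp_cmult core restK restLD linfD)
  then show "\<exists>a. ((\<lambda>w. (w - z \<alpha>)^(m \<alpha>) * ham_H M (kappa c) S m z l linf \<eta> J w) \<longlongrightarrow> a) (at (z \<alpha>))"
    unfolding Rp_def .
qed

end
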